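(* Let $\Lambda=\{(\lambda_1,\lambda_2):1\le\lambda_1<\lambda_2\le n\}$ and $V$ the set of functions $v:\Lambda\to\mathbb Z$. Let $H=\bigoplus_{\sigma\in S_n}H_\sigma$ with $H_\sigma=\ell^2(\mathbb Z)^{\otimes\Lambda}$, the tensor factors labelled by $\lambda\in\Lambda$, with standard basis $\{e^\lambda_{\sigma,m}:m\in\mathbb Z\}$ in the factor labelled $\lambda$, and put $\varepsilon_{\sigma,v}=\bigotimes_{\lambda\in\Lambda}e^\lambda_{\sigma,v(\lambda)}$ (an orthonormal basis of $H$ as $\sigma\in S_n$, $v\in V$ vary). For $i,k\in\{1,\dots,n\}$ let $U_{ik}$ be the bounded operator on $H$ with $U_{ik}\varepsilon_{\sigma,v}=\bigotimes_\lambda U_{ik}^\lambda e^\lambda_{\sigma,v(\lambda)}$ if $\sigma(k)=i$ and $U_{ik}\varepsilon_{\sigma,v}=0$ if $\sigma(k)\neq i$, where $U_{ik}^\lambda e^\lambda_{\sigma,m}=e^\lambda_{\sigma,m}$ if $k\notin\{\lambda_1,\lambda_2\}$, $U_{ik}^\lambda e^\lambda_{\sigma,m}=(\overline{\omega_{i,\sigma(\lambda_2)}}\,\omega_{k,\lambda_2})^me^\lambda_{\sigma,m}$ if $k=\lambda_1$, and $U_{ik}^\lambda e^\lambda_{\sigma,m}=e^\lambda_{\sigma,m+1}$ if $k=\lambda_2$. Then the operators $U_{ik}$ satisfy, for all $i,j,k,l$: $U_{ik}U_{jl}+\omega_{ji}U_{jk}U_{il}=\omega_{kl}U_{il}U_{jk}+\omega_{ji}\omega_{kl}U_{jl}U_{ik}$;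 $\sum_iU_{ik}U_{il}^*=\delta_{kl}1$; $\sum_iU_{il}^*U_{ik}=\delta_{kl}1$; $U_{jk}U_{ik}^*=0$ and $U_{ik}^*U_{jk}=0$ for $i\neq j$.
   Context: $n\ge2$, $\theta=(\theta_{ij})\in M_n(\mathbb R)$ skew-symmetric, $\omega_{ij}=e^{2\pi i\theta_{ij}}$; $S_n$ is the symmetric group on $\{1,\dots,n\}$. *)

theory Defs
  imports "HOL-Analysis.Analysis"
begin

definition Lam :: "nat \<Rightarrow> (nat \<times> nat) set" where
  "Lam n = {(l1, l2). 1 \<le> l1 \<and> l1 < l2 \<and> l2 \<le> n}"

definition omega :: "(nat \<Rightarrow> nat \<Rightarrow> real) \<Rightarrow> nat \<Rightarrow> nat \<Rightarrow> complex" where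
  "omega \<theta> i j = exp (2 * of_real pi * \<i> * of_real (\<theta> i j))"

text \<open>Basis indices (sigma, v) of H: sigma a permutation of {1..n}, v : Lambda -> int
  (represented extensionally, i.e. v is 0 outside Lambda).\<close>
type_synonym bidx = "(nat \<Rightarrow> nat) \<times> (nat \<times> nat \<Rightarrow> int)"

definition Idx :: "nat \<Rightarrow> bidx set" where
  "Idx n = {(\<sigma>, v). \<sigma> permutes {1..n} \<and> (\<forall>p. p \<notin> Lam n \<longrightarrow> v p = 0)}"

text \<open>Bounded operators on H are represented by their matrices w.r.t. the orthonormal
  basis eps_(sigma,v):  M a b = < eps_a , T eps_b >.\<close>
type_synonym opmat = "bidx \<Rightarrow> bidx \<Rightarrow> complex"

definition mmult :: "nat \<Rightarrow> opmat \<Rightarrow> opmat \<Rightarrow> opmat" where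
  "mmult n A B = (\<lambda>a b. infsum (\<lambda>c. A a c * B c b) (Idx n))"

definition madj :: "opmat \<Rightarrow> opmat" where
  "madj A = (\<lambda>a b. cnj (A b a))"

definition mid :: opmat where
  "mid = (\<lambda>a b. if a = b then 1 else 0)"

definition mzero :: opmat where
  "mzero = (\<lambda>a b. 0)"

definition madd :: "opmat \<Rightarrow> opmat \<Rightarrow> opmat" where
  "madd A B = (\<lambda>a b. A a b + B a b)"

definition msmult :: "complex \<Rightarrow> opmat \<Rightarrow> opmat" where
  "msmult c A = (\<lambda>a b. c * A a b)"

definition msum :: "nat set \<Rightarrow> (nat \<Rightarrow> opmat) \<Rightarrow> opmat" where
  "msum S F = (\<lambda>a b. \<Sum>i\<in>S. F i a b)"

definition meq :: "nat \<Rightarrow> opmat \<Rightarrow> opmat \<Rightarrow> bool" where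
  "meq n A B \<longleftrightarrow> (\<forall>a\<in>Idx n. \<forall>b\<in>Idx n. A a b = B a b)"

text \<open>The single-factor operator U_ik^lambda (for the summand sigma), acting on e_m:
  U^lambda e_m = c * e_m', returned as the pair (c, m').\<close>
definition Ufac :: "(nat \<Rightarrow> nat \<Rightarrow> real) \<Rightarrow> nat \<Rightarrow> nat \<Rightarrow> (nat \<Rightarrow> nat) \<Rightarrow> nat \<times> nat
                    \<Rightarrow> int \<Rightarrow> complex \<times> int" where
  "Ufac \<theta> i k \<sigma> l m =
     (if k \<noteq> fst l \<and> k \<noteq> snd l then (1, m)
      else if k = fst l then ((cnj (omega \<theta> i (\<sigma> (snd l))) * omega \<theta> k (snd l)) powi m, m)
      else (1, m + 1))"

text \<open>Tensor product over lambda in Lambda of the U^lambda applied to eps_(sigma,v):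
  coefficient and target index.\<close>
definition Ucoef :: "nat \<Rightarrow> (nat \<Rightarrow> nat \<Rightarrow> real) \<Rightarrow> nat \<Rightarrow> nat \<Rightarrow> bidx \<Rightarrow> complex" where
  "Ucoef n \<theta> i k b = (\<Prod>l\<in>Lam n. fst (Ufac \<theta> i k (fst b) l (snd b l)))"

definition Utgt :: "nat \<Rightarrow> (nat \<Rightarrow> nat \<Rightarrow> real) \<Rightarrow> nat \<Rightarrow> nat \<Rightarrow> bidx \<Rightarrow> bidx" where
  "Utgt n \<theta> i k b = (fst b, \<lambda>l. if l \<in> Lam n then snd (Ufac \<theta> i k (fst b) l (snd b l)) else 0)"

definition Umat :: "nat \<Rightarrow> (nat \<Rightarrow> nat \<Rightarrow> real) \<Rightarrow> nat \<Rightarrow> nat \<Rightarrow> opmat" where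
  "Umat n \<theta> i k = (\<lambda>a b. if fst b k = i \<and> a = Utgt n \<theta> i k b then Ucoef n \<theta> i k b else 0)"

end

theory Submission
  imports Defs
begin

lemma infsum_single_pt:
  assumes "c0 \<in> S" "\<And>c. c \<in> S \<Longrightarrow> c \<noteq> c0 \<Longrightarrow> f c = 0"
  shows "infsum f S = (f c0 :: complex)"
proof -
  have "infsum f S = infsum f {c0}"
    by (rule infsum_cong_neutral) (use assms in auto)
  then show ?thesis by simp
qed

definition tg :: "nat \<Rightarrow> nat \<Rightarrow> bidx \<Rightarrow> bidx" where
  "tg n k b = (fst b, \<lambda>p. if p \<in> Lam n then snd b p + (if snd p = k \<and> fst p \<noteq> k then 1 else 0) else 0)"

definition untg :: "nat \<Rightarrow> nat \<Rightarrow> bidx \<Rightarrow> bidx" where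
  "untg n k b = (fst b, \<lambda>p. if p \<in> Lam n then snd b p - (if snd p = k \<and> fst p \<noteq> k then 1 else 0) else 0)"

lemma Utgt_tg: "Utgt n \<theta> i k b = tg n k b"
  unfolding Utgt_def tg_def Ufac_def by (auto intro!: ext)

lemma fst_tg[simp]: "fst (tg n k b) = fst b" by (simp add: tg_def)
lemma fst_untg[simp]: "fst (untg n k b) = fst b" by (simp add: untg_def)

lemma tg_Idx: "b \<in> Idx n \<Longrightarrow> tg n k b \<in> Idx n"
  by (auto simp: Idx_def tg_def)
lemma untg_Idx: "b \<in> Idx n \<Longrightarrow> untg n k b \<in> Idx n"
  by (auto simp: Idx_def untg_def)
lemma tg_untg: "b \<in> Idx n \<Longrightarrow> tg n k (untg n k b) = b"
  by (cases b) (auto simp: Idx_def untg_def tg_def intro!: ext)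
lemma untg_tg: "b \<in> Idx n \<Longrightarrow> untg n k (tg n k b) = b"
  by (cases b) (auto simp: Idx_def untg_def tg_def intro!: ext)
lemma tg_inj: "a \<in> Idx n \<Longrightarrow> b \<in> Idx n \<Longrightarrow> tg n k a = tg n k b \<Longrightarrow> a = b"
  by (metis untg_tg)
lemma tg_eq_iff: "c \<in> Idx n \<Longrightarrow> a \<in> Idx n \<Longrightarrow> (a = tg n k c) \<longleftrightarrow> c = untg n k a"
  by (metis untg_tg tg_untg)

lemma Umat_tg: "Umat n \<theta> i k a b = (if fst b k = i \<and> a = tg n k b then Ucoef n \<theta> i k b else 0)"
  by (simp add: Umat_def Utgt_tg)

lemma omega_nz: "omega \<theta> i j \<noteq> 0" by (simp add: omega_def)
lemma norm_omega: "norm (omega \<theta> i j) = 1"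
  unfolding omega_def by (simp add: norm_exp_eq_Re)

lemma norm_Ufac: "norm (fst (Ufac \<theta> i k s l m)) = 1"
  unfolding Ufac_def by (auto simp: norm_power_int norm_mult norm_omega)

lemma norm_Ucoef: "norm (Ucoef n \<theta> i k b) = 1"
  unfolding Ucoef_def by (simp add: prod_norm[symmetric] norm_Ufac)


lemma finite_Lam: "finite (Lam n)"
  by (rule finite_subset[of _ "{1..n} \<times> {1..n}"]) (auto simp: Lam_def)

lemma Ufac_shift:
  assumes "p \<in> Lam n"
  shows "fst (Ufac \<theta> i k s p (m + (if snd p = l \<and> fst p \<noteq> l then 1 else 0)))
       = fst (Ufac \<theta> i k s p m) * (if p = (k, l) then cnj (omega \<theta> i (s l)) * omega \<theta> k l else 1)"
proof -
  obtain p1 p2 where p: "p = (p1, p2)" "p1 < p2" using assms by (cases p) (auto simp: Lam_def)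
  show ?thesis
  proof (cases "k = p1")
    case True
    then show ?thesis using p
      by (auto simp: Ufac_def power_int_add_1 omega_nz)
  next
    case False
    then show ?thesis using p by (auto simp: Ufac_def)
  qed
qed

lemma coef_tg:
  "Ucoef n \<theta> i k (tg n l b) = Ucoef n \<theta> i k b * (if (k,l) \<in> Lam n then cnj (omega \<theta> i (fst b l)) * omega \<theta> k l else 1)"
proof -
  have "Ucoef n \<theta> i k (tg n l b) = (\<Prod>p\<in>Lam n. fst (Ufac \<theta> i k (fst b) p (snd b p)) * (if p = (k, l) then cnj (omega \<theta> i (fst b l)) * omega \<theta> k l else 1))"
    unfolding Ucoef_def tg_def by (intro prod.cong refl) (simp add: Ufac_shift)
  also have "\<dots> = Ucoef n \<theta> i k b * (\<Prod>p\<in>Lam n. (if p = (k, l) then cnj (omega \<theta> i (fst b l)) * omega \<theta> k l else 1))"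
    unfolding Ucoef_def by (rule prod.distrib)
  also have "(\<Prod>p\<in>Lam n. (if p = (k, l) then cnj (omega \<theta> i (fst b l)) * omega \<theta> k l else 1)) = (if (k,l) \<in> Lam n then cnj (omega \<theta> i (fst b l)) * omega \<theta> k l else 1)"
    by (simp add: prod.delta[OF finite_Lam])
  finally show ?thesis .
qed


lemma omega_cnj:
  assumes "\<forall>i\<in>{1..n}. \<forall>j\<in>{1..n}. \<theta> j i = - \<theta> i j" "a \<in> {1..n}" "b \<in> {1..n}"
  shows "cnj (omega \<theta> a b) = omega \<theta> b a"
proof -
  have "\<theta> b a = - \<theta> a b" using assms by blast
  then have "cnj (2 * of_real pi * \<i> * of_real (\<theta> a b)) = 2 * of_real pi * \<i> * of_real (\<theta> b a)"
    by simp
  then show ?thesis unfolding omega_def exp_cnj by (simp only:)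
qed

lemma omega_inv:
  assumes "\<forall>i\<in>{1..n}. \<forall>j\<in>{1..n}. \<theta> j i = - \<theta> i j" "a \<in> {1..n}" "b \<in> {1..n}"
  shows "omega \<theta> a b * omega \<theta> b a = 1"
proof -
  have "\<theta> b a = - \<theta> a b" using assms by blast
  then have "2 * of_real pi * \<i> * of_real (\<theta> a b) + 2 * of_real pi * \<i> * of_real (\<theta> b a) = (0::complex)"
    by simp
  then show ?thesis unfolding omega_def exp_add[symmetric] by (simp only: exp_zero)
qed

lemma omega_diag:
  assumes "\<forall>i\<in>{1..n}. \<forall>j\<in>{1..n}. \<theta> j i = - \<theta> i j" "a \<in> {1..n}"
  shows "omega \<theta> a a = 1"
proof -
  have "\<theta> a a = - \<theta> a a" using assms by blast
  then have "\<theta> a a = 0" by linarith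
  then show ?thesis unfolding omega_def by simp
qed

lemma Idx_perm: "c \<in> Idx n \<Longrightarrow> fst c permutes {1..n}"
  by (auto simp: Idx_def)

lemma Idx_inj: "c \<in> Idx n \<Longrightarrow> fst c k = fst c l \<Longrightarrow> k = l"
  by (meson Idx_perm permutes_inj injD)

lemma Idx_range: "c \<in> Idx n \<Longrightarrow> k \<in> {1..n} \<Longrightarrow> fst c k \<in> {1..n}"
  by (meson Idx_perm permutes_in_image)

lemma tg_comm: "tg n k (tg n l b) = tg n l (tg n k b)"
  by (auto simp: tg_def intro!: ext)

lemma mm_UU:
  assumes "b \<in> Idx n"
  shows "mmult n (Umat n \<theta> i k) (Umat n \<theta> j l) a b =
    (if fst b l = j \<and> fst b k = i \<and> a = tg n k (tg n l b) then Ucoef n \<theta> j l b * Ucoef n \<theta> i k (tg n l b) else 0)"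
proof -
  have "mmult n (Umat n \<theta> i k) (Umat n \<theta> j l) a b = Umat n \<theta> i k a (tg n l b) * Umat n \<theta> j l (tg n l b) b"
    unfolding mmult_def
    by (rule infsum_single_pt) (simp_all add: tg_Idx assms Umat_tg)
  then show ?thesis by (simp add: Umat_tg)
qed

lemma mm_UU0:
  assumes "b \<in> Idx n" "fst b l \<noteq> j \<or> fst b k \<noteq> i"
  shows "mmult n (Umat n \<theta> i k) (Umat n \<theta> j l) a b = 0"
  using assms(2) by (subst mm_UU[OF assms(1)]) auto

lemma mm_UU1:
  assumes "b \<in> Idx n" "fst b l = j" "fst b k = i"
  shows "mmult n (Umat n \<theta> i k) (Umat n \<theta> j l) a b =
    (if a = tg n k (tg n l b) then Ucoef n \<theta> j l b * Ucoef n \<theta> i k (tg n l b) else 0)"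
  using assms(2,3) by (subst mm_UU[OF assms(1)]) simp

lemma mm_UadjU:
  assumes "a \<in> Idx n"
  shows "mmult n (Umat n \<theta> j k) (madj (Umat n \<theta> i l)) a b =
    (if fst a k = j \<and> fst a l = i \<and> b = tg n l (untg n k a) then Ucoef n \<theta> j k (untg n k a) * cnj (Ucoef n \<theta> i l (untg n k a)) else 0)"
proof -
  have "mmult n (Umat n \<theta> j k) (madj (Umat n \<theta> i l)) a b = Umat n \<theta> j k a (untg n k a) * cnj (Umat n \<theta> i l b (untg n k a))"
    unfolding mmult_def madj_def
  proof (rule infsum_single_pt)
    show "untg n k a \<in> Idx n" by (simp add: untg_Idx assms)
    fix c assume "c \<in> Idx n" "c \<noteq> untg n k a"
    then have "a \<noteq> tg n k c" using tg_eq_iff assms by blast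
    then show "Umat n \<theta> j k a c * cnj (Umat n \<theta> i l b c) = 0" by (simp add: Umat_tg)
  qed
  then show ?thesis using assms by (simp add: Umat_tg tg_untg)
qed

lemma mm_adjUU:
  assumes "b \<in> Idx n"
  shows "mmult n (madj (Umat n \<theta> i l)) (Umat n \<theta> j k) a b =
    (if fst b k = j \<and> fst a l = i \<and> tg n l a = tg n k b then cnj (Ucoef n \<theta> i l a) * Ucoef n \<theta> j k b else 0)"
proof -
  have "mmult n (madj (Umat n \<theta> i l)) (Umat n \<theta> j k) a b = cnj (Umat n \<theta> i l (tg n k b) a) * Umat n \<theta> j k (tg n k b) b"
    unfolding mmult_def madj_def
    by (rule infsum_single_pt) (simp_all add: tg_Idx assms Umat_tg)
  then show ?thesis by (auto simp: Umat_tg)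
qed

lemma cnj_sq: "norm z = 1 \<Longrightarrow> z * cnj z = (1::complex)"
  by (metis complex_norm_square of_real_1 power_one)
lemma cnj_sq': "norm z = 1 \<Longrightarrow> cnj z * z = (1::complex)"
  by (metis cnj_sq mult.commute)


lemma key:
  assumes sk: "\<forall>i\<in>{1..n}. \<forall>j\<in>{1..n}. \<theta> j i = - \<theta> i j"
    and b: "b \<in> Idx n" and kl: "k \<in> {1..n}" "l \<in> {1..n}" "k \<noteq> l"
    and ij: "fst b k = i" "fst b l = j"
  shows "Ucoef n \<theta> j l b * Ucoef n \<theta> i k (tg n l b) =
         omega \<theta> j i * omega \<theta> k l * (Ucoef n \<theta> i k b * Ucoef n \<theta> j l (tg n k b))"
proof -
  have i: "i \<in> {1..n}" and j: "j \<in> {1..n}" using Idx_range[OF b] kl ij by auto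
  have c1: "cnj (omega \<theta> i j) = omega \<theta> j i" by (rule omega_cnj[OF sk i j])
  have c2: "cnj (omega \<theta> j i) = omega \<theta> i j" by (rule omega_cnj[OF sk j i])
  have o1: "omega \<theta> j i * omega \<theta> i j = 1" by (rule omega_inv[OF sk j i])
  have o2: "omega \<theta> k l * omega \<theta> l k = 1" by (rule omega_inv[OF sk kl(1) kl(2)])
  show ?thesis
  proof (cases "k < l")
    case True
    then have "(k,l) \<in> Lam n" "(l,k) \<notin> Lam n" using kl by (auto simp: Lam_def)
    then have e1: "Ucoef n \<theta> i k (tg n l b) = Ucoef n \<theta> i k b * (omega \<theta> j i * omega \<theta> k l)"
      and e2: "Ucoef n \<theta> j l (tg n k b) = Ucoef n \<theta> j l b"
      by (simp_all add: coef_tg ij c1)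
    show ?thesis unfolding e1 e2 by (simp only: mult_ac)
  next
    case False
    then have "(k,l) \<notin> Lam n" "(l,k) \<in> Lam n" using kl by (auto simp: Lam_def)
    then have h1: "Ucoef n \<theta> j l b * Ucoef n \<theta> i k (tg n l b) = Ucoef n \<theta> i k b * Ucoef n \<theta> j l b"
      and h2: "omega \<theta> j i * omega \<theta> k l * (Ucoef n \<theta> i k b * Ucoef n \<theta> j l (tg n k b))
        = (omega \<theta> j i * omega \<theta> i j) * (omega \<theta> k l * omega \<theta> l k) * (Ucoef n \<theta> i k b * Ucoef n \<theta> j l b)"
      by (simp_all add: coef_tg ij c2 mult_ac)
    show ?thesis unfolding h1 h2 o1 o2 by simp
  qed
qed

lemma part1:
  assumes sk: "\<forall>i\<in>{1..n}. \<forall>j\<in>{1..n}. \<theta> j i = - \<theta> i j"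
    and b: "b \<in> Idx n" and r: "i \<in> {1..n}" "j \<in> {1..n}" "k \<in> {1..n}" "l \<in> {1..n}"
  shows "madd (mmult n (Umat n \<theta> i k) (Umat n \<theta> j l)) (msmult (omega \<theta> j i) (mmult n (Umat n \<theta> j k) (Umat n \<theta> i l))) a b =
         madd (msmult (omega \<theta> k l) (mmult n (Umat n \<theta> i l) (Umat n \<theta> j k)))
                   (msmult (omega \<theta> j i * omega \<theta> k l) (mmult n (Umat n \<theta> j l) (Umat n \<theta> i k))) a b"
proof -
  let ?T1 = "mmult n (Umat n \<theta> i k) (Umat n \<theta> j l) a b"
  let ?T2 = "mmult n (Umat n \<theta> j k) (Umat n \<theta> i l) a b"
  let ?T3 = "mmult n (Umat n \<theta> i l) (Umat n \<theta> j k) a b"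
  let ?T4 = "mmult n (Umat n \<theta> j l) (Umat n \<theta> i k) a b"
  have G: "?T1 + omega \<theta> j i * ?T2 = omega \<theta> k l * ?T3 + omega \<theta> j i * omega \<theta> k l * ?T4"
  proof (cases "k = l")
    case True
    show ?thesis
    proof (cases "i = j")
      case True
      have "omega \<theta> k l = 1" using omega_diag[OF sk r(3)] \<open>k = l\<close> by simp
      then show ?thesis using True \<open>k = l\<close> by simp
    next
      case False
      have "?T1 = 0" "?T2 = 0" "?T3 = 0" "?T4 = 0"
        using False \<open>k = l\<close> by (auto intro!: mm_UU0[OF b])
      then show ?thesis by simp
    qed
  next
    case False
    have o1: "omega \<theta> j i * omega \<theta> i j = 1" by (rule omega_inv[OF sk r(2) r(1)])
    have inj: "fst b k \<noteq> fst b l" using Idx_inj[OF b] False by blast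
    show ?thesis
    proof (cases "fst b k = i \<and> fst b l = j")
      case True
      have k1: "Ucoef n \<theta> j l b * Ucoef n \<theta> i k (tg n l b) =
         omega \<theta> j i * omega \<theta> k l * (Ucoef n \<theta> i k b * Ucoef n \<theta> j l (tg n k b))"
        by (rule key[OF sk b r(3) r(4) False conjunct1[OF True] conjunct2[OF True]])
      have "?T2 = 0" "?T3 = 0"
        using True inj by (auto intro!: mm_UU0[OF b])
      moreover have "?T1 = (if a = tg n k (tg n l b) then Ucoef n \<theta> j l b * Ucoef n \<theta> i k (tg n l b) else 0)"
        using True by (intro mm_UU1[OF b]) auto
      moreover have "?T4 = (if a = tg n k (tg n l b) then Ucoef n \<theta> i k b * Ucoef n \<theta> j l (tg n k b) else 0)"
        using True by (subst mm_UU1[OF b]) (auto simp: tg_comm)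
      ultimately show ?thesis using k1 by simp
    next
      case nf: False
      show ?thesis
      proof (cases "fst b k = j \<and> fst b l = i")
        case True
        have k2: "Ucoef n \<theta> i l b * Ucoef n \<theta> j k (tg n l b) =
           omega \<theta> i j * omega \<theta> k l * (Ucoef n \<theta> j k b * Ucoef n \<theta> i l (tg n k b))"
          by (rule key[OF sk b r(3) r(4) False conjunct1[OF True] conjunct2[OF True]])
        have e: "omega \<theta> j i * (Ucoef n \<theta> i l b * Ucoef n \<theta> j k (tg n l b)) =
            omega \<theta> k l * (Ucoef n \<theta> j k b * Ucoef n \<theta> i l (tg n k b))"
        proof -
          have "omega \<theta> j i * (Ucoef n \<theta> i l b * Ucoef n \<theta> j k (tg n l b)) =
            (omega \<theta> j i * omega \<theta> i j) * omega \<theta> k l * (Ucoef n \<theta> j k b * Ucoef n \<theta> i l (tg n k b))"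
            using k2 by (simp add: algebra_simps)
          then show ?thesis using o1 by simp
        qed
        have "?T1 = 0" "?T4 = 0"
          using True inj by (auto intro!: mm_UU0[OF b])
        moreover have "?T2 = (if a = tg n k (tg n l b) then Ucoef n \<theta> i l b * Ucoef n \<theta> j k (tg n l b) else 0)"
          using True by (intro mm_UU1[OF b]) auto
        moreover have "?T3 = (if a = tg n k (tg n l b) then Ucoef n \<theta> j k b * Ucoef n \<theta> i l (tg n k b) else 0)"
          using True by (subst mm_UU1[OF b]) (auto simp: tg_comm)
        ultimately show ?thesis using e by simp
      next
        case False
        have "?T1 = 0" "?T2 = 0" "?T3 = 0" "?T4 = 0"
          using False nf by (auto intro!: mm_UU0[OF b])
        then show ?thesis by simp
      qed
    qed
  qed
  then show ?thesis by (simp add: madd_def msmult_def)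
qed


lemma part2:
  assumes a: "a \<in> Idx n" and b: "b \<in> Idx n" and kl: "k \<in> {1..n}" "l \<in> {1..n}"
  shows "msum {1..n} (\<lambda>i. mmult n (Umat n \<theta> i k) (madj (Umat n \<theta> i l))) a b = (if k = l then mid else mzero) a b"
proof (cases "k = l")
  case True
  have "mmult n (Umat n \<theta> i k) (madj (Umat n \<theta> i l)) a b = (if fst a k = i then (if a = b then 1 else 0) else 0)" for i
    using True by (auto simp: mm_UadjU[OF a] tg_untg[OF a] cnj_sq norm_Ucoef)
  then show ?thesis using True Idx_range[OF a kl(1)] by (simp add: msum_def mid_def)
next
  case False
  have "fst a k \<noteq> fst a l" using Idx_inj[OF a] False by blast
  then have "mmult n (Umat n \<theta> i k) (madj (Umat n \<theta> i l)) a b = 0" for i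
    by (auto simp: mm_UadjU[OF a])
  then show ?thesis using False by (simp add: msum_def mzero_def)
qed

lemma part3:
  assumes a: "a \<in> Idx n" and b: "b \<in> Idx n" and kl: "k \<in> {1..n}" "l \<in> {1..n}"
  shows "msum {1..n} (\<lambda>i. mmult n (madj (Umat n \<theta> i l)) (Umat n \<theta> i k)) a b = (if k = l then mid else mzero) a b"
proof (cases "k = l")
  case True
  have "mmult n (madj (Umat n \<theta> i l)) (Umat n \<theta> i k) a b = (if fst a k = i then (if a = b then 1 else 0) else 0)" for i
  proof -
    have "tg n k a = tg n k b \<longleftrightarrow> a = b" using tg_inj[OF a b] by blast
    then show ?thesis using True by (auto simp: mm_adjUU[OF b] cnj_sq' norm_Ucoef)
  qed
  then show ?thesis using True Idx_range[OF a kl(1)] by (simp add: msum_def mid_def)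
next
  case False
  have "fst a k \<noteq> fst a l" using Idx_inj[OF a] False by blast
  have "mmult n (madj (Umat n \<theta> i l)) (Umat n \<theta> i k) a b = 0" for i
  proof -
    have "\<not> (fst b k = i \<and> fst a l = i \<and> tg n l a = tg n k b)"
    proof
      assume h: "fst b k = i \<and> fst a l = i \<and> tg n l a = tg n k b"
      then have "fst (tg n l a) = fst (tg n k b)" by simp
      then have "fst a = fst b" by simp
      then show False using h \<open>fst a k \<noteq> fst a l\<close> by simp
    qed
    then show ?thesis unfolding mm_adjUU[OF b] by (rule if_not_P)
  qed
  then show ?thesis using False by (simp add: msum_def mzero_def)
qed

lemma part4a:
  assumes a: "a \<in> Idx n" and ij: "i \<noteq> j"
  shows "mmult n (Umat n \<theta> j k) (madj (Umat n \<theta> i k)) a b = mzero a b"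
  using ij by (auto simp: mm_UadjU[OF a] mzero_def)

lemma part4b:
  assumes a: "a \<in> Idx n" and b: "b \<in> Idx n" and ij: "i \<noteq> j"
  shows "mmult n (madj (Umat n \<theta> i k)) (Umat n \<theta> j k) a b = mzero a b"
proof -
  have "\<not> (fst b k = j \<and> fst a k = i \<and> tg n k a = tg n k b)"
    using tg_inj[OF a b] ij by blast
  then show ?thesis unfolding mm_adjUU[OF b] mzero_def by (rule if_not_P)
qed

theorem proposition3p2:
  fixes n :: nat and \<theta> :: "nat \<Rightarrow> nat \<Rightarrow> real"
  assumes "n \<ge> 2"
    and "\<forall>i\<in>{1..n}. \<forall>j\<in>{1..n}. \<theta> j i = - \<theta> i j"
  defines "U \<equiv> Umat n \<theta>" and "\<omega> \<equiv> omega \<theta>"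
  shows
   "(\<forall>i\<in>{1..n}. \<forall>j\<in>{1..n}. \<forall>k\<in>{1..n}. \<forall>l\<in>{1..n}.
       meq n (madd (mmult n (U i k) (U j l)) (msmult (\<omega> j i) (mmult n (U j k) (U i l))))
             (madd (msmult (\<omega> k l) (mmult n (U i l) (U j k)))
                   (msmult (\<omega> j i * \<omega> k l) (mmult n (U j l) (U i k)))))
    \<and> (\<forall>k\<in>{1..n}. \<forall>l\<in>{1..n}.
         meq n (msum {1..n} (\<lambda>i. mmult n (U i k) (madj (U i l)))) (if k = l then mid else mzero))
    \<and> (\<forall>k\<in>{1..n}. \<forall>l\<in>{1..n}.
         meq n (msum {1..n} (\<lambda>i. mmult n (madj (U i l)) (U i k))) (if k = l then mid else mzero))
    \<and> (\<forall>i\<in>{1..n}. \<forall>j\<in>{1..n}. \<forall>k\<in>{1..n}. i \<noteq> j \<longrightarrow>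
         meq n (mmult n (U j k) (madj (U i k))) mzero \<and> meq n (mmult n (madj (U i k)) (U j k)) mzero)"
  unfolding U_def \<omega>_def meq_def
  apply (intro conjI ballI impI)
      apply (rule part1[OF assms(2)]; assumption)
     apply (rule part2; assumption)
    apply (rule part3; assumption)
   apply (rule part4a; assumption)
  apply (rule part4b; assumption)
  done

end
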